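(* Fix a constant $\alpha\in(0,1)$. There are constants $\kappa_0\ge1$, $c_\alpha>0$ and $\epsilon_\alpha>0$ (depending only on $\alpha$) such that for every $\epsilon\in(0,\epsilon_\alpha)$, any quantum query algorithm which, given unitaries $\mathcal O_\rho,\mathcal O_\sigma$ preparing purifications of arbitrary mixed states $\rho,\sigma$ with $\rho\ge I/\kappa_0$ and $\sigma\ge I/\kappa_0$, outputs an estimate of $\widehat F_\alpha(\rho,\sigma)$ within additive error $\epsilon$ with probability at least $2/3$, must make at least $c_\alpha/\epsilon$ queries on some such input. That is, estimating $\widehat F_\alpha$ requires $\Omega(1/\epsilon)$ queries even when $\kappa_\rho=\kappa_\sigma=\Theta(1)$.
   Context: For positive definite $X,Z$ and real $t$, $X\#_tZ:=X^{1/2}(X^{-1/2}ZX^{-1/2})^tX^{1/2}$, and $\widehat F_\alpha(\rho,\sigma):=\operatorname{Tr}(\sigma\#_\alpha\rho)$. A unitary $\mathcal O_\rho$ on $n+a$ qubits prepares a purification of $\rho$ if $\operatorname{Tr}_a(\mathcal O_\rho|0\rangle\langle0|\mathcal O_\rho^\dagger)=\rho$. A query means one use of any of $\mathcal O$, $\mathcal O^\dagger$, controlled-$\mathcal O$, controlled-$\mathcal O^\dagger$. *)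

theory Defs
  imports Complex_Main "Jordan_Normal_Form.Matrix"
begin

definition cadj :: "complex mat \<Rightarrow> complex mat" where
  "cadj A = mat (dim_col A) (dim_row A) (\<lambda>(i,j). cnj (A $$ (j,i)))"

definition cunitary :: "nat \<Rightarrow> complex mat \<Rightarrow> bool" where
  "cunitary d U \<longleftrightarrow> U \<in> carrier_mat d d \<and> cadj U * U = 1\<^sub>m d \<and> U * cadj U = 1\<^sub>m d"

definition ctrace :: "complex mat \<Rightarrow> complex" where
  "ctrace A = (\<Sum>i<dim_row A. A $$ (i,i))"

definition cpsd :: "nat \<Rightarrow> complex mat \<Rightarrow> bool" where
  "cpsd d A \<longleftrightarrow> A \<in> carrier_mat d d \<and> cadj A = A \<and>
     (\<forall>v :: nat \<Rightarrow> complex. Re (\<Sum>i<d. \<Sum>j<d. cnj (v i) * A $$ (i,j) * v j) \<ge> 0)"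

definition loewner_ge :: "nat \<Rightarrow> complex mat \<Rightarrow> complex mat \<Rightarrow> bool" where
  "loewner_ge d A B \<longleftrightarrow> A \<in> carrier_mat d d \<and> B \<in> carrier_mat d d \<and> cpsd d (A - B)"

definition cdiag :: "nat \<Rightarrow> (nat \<Rightarrow> real) \<Rightarrow> complex mat" where
  "cdiag d f = mat d d (\<lambda>(i,j). if i = j then complex_of_real (f i) else 0)"

definition mat_powr :: "nat \<Rightarrow> complex mat \<Rightarrow> real \<Rightarrow> complex mat" where
  "mat_powr d A t = (THE B. \<exists>U lam. cunitary d U \<and> (\<forall>i<d. lam i > 0) \<and>
       A = U * cdiag d lam * cadj U \<and> B = U * cdiag d (\<lambda>i. lam i powr t) * cadj U)"

definition mat_geo :: "nat \<Rightarrow> complex mat \<Rightarrow> real \<Rightarrow> complex mat \<Rightarrow> complex mat" where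
  "mat_geo d X t Z = mat_powr d X (1/2) *
      mat_powr d (mat_powr d X (-1/2) * Z * mat_powr d X (-1/2)) t * mat_powr d X (1/2)"

text \<open>\<open>\<widehat>F_\<alpha>(\<rho>,\<sigma>) = Tr(\<sigma> #_\<alpha> \<rho>)\<close> (real-valued for positive definite inputs; we take the real part).\<close>
definition Fhat :: "nat \<Rightarrow> real \<Rightarrow> complex mat \<Rightarrow> complex mat \<Rightarrow> real" where
  "Fhat d \<alpha> \<rho> \<sigma> = Re (ctrace (mat_geo d \<sigma> \<alpha> \<rho>))"

text \<open>Basis index of the \<open>(n+a)\<close>-qubit space: \<open>i * 2^a + k\<close> with \<open>i\<close> the system (first \<open>n\<close> qubits)
  and \<open>k\<close> the ancilla (last \<open>a\<close> qubits). \<open>O|0\<rangle>\<close> is the 0-th column of \<open>O\<close>.\<close>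
definition ptrace_anc_prep :: "nat \<Rightarrow> nat \<Rightarrow> complex mat \<Rightarrow> complex mat" where
  "ptrace_anc_prep n a Op = mat (2^n) (2^n) (\<lambda>(i,j).
      \<Sum>k<2^a. Op $$ (i * 2^a + k, 0) * cnj (Op $$ (j * 2^a + k, 0)))"

definition prepares_purification :: "nat \<Rightarrow> nat \<Rightarrow> complex mat \<Rightarrow> complex mat \<Rightarrow> bool" where
  "prepares_purification n a Op \<rho> \<longleftrightarrow> cunitary (2^(n+a)) Op \<and> ptrace_anc_prep n a Op = \<rho>"

text \<open>The algorithm acts on a register of dimension \<open>2 * N * W\<close>, \<open>N = 2^(n+a)\<close>, \<open>W = 2^w\<close>:
  a control qubit \<open>c\<close>, the oracle register \<open>x < N\<close> and a workspace \<open>k < W\<close>, with basis index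
  \<open>c * (N*W) + x * W + k\<close>.  Arbitrary unitaries between queries make the fixed placement of
  the oracle register without loss of generality.\<close>
definition qdim :: "nat \<Rightarrow> nat \<Rightarrow> nat" where
  "qdim N W = 2 * N * W"

definition ext_op :: "nat \<Rightarrow> nat \<Rightarrow> complex mat \<Rightarrow> complex mat" where
  "ext_op N W Op = mat (qdim N W) (qdim N W) (\<lambda>(r,s).
     let c = r div (N*W); x = (r mod (N*W)) div W; k = r mod W;
         c' = s div (N*W); x' = (s mod (N*W)) div W; k' = s mod W in
     if c = c' \<and> k = k' then Op $$ (x,x') else 0)"

definition ctrl_op :: "nat \<Rightarrow> nat \<Rightarrow> complex mat \<Rightarrow> complex mat" where
  "ctrl_op N W Op = mat (qdim N W) (qdim N W) (\<lambda>(r,s).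
     let c = r div (N*W); x = (r mod (N*W)) div W; k = r mod W;
         c' = s div (N*W); x' = (s mod (N*W)) div W; k' = s mod W in
     if c = c' \<and> k = k' then (if c = 0 then (if x = x' then 1 else 0) else Op $$ (x,x')) else 0)"

definition query_op :: "nat \<Rightarrow> nat \<Rightarrow> nat \<Rightarrow> complex mat \<Rightarrow> complex mat" where
  "query_op N W q Op =
     (if q = 0 then ext_op N W Op else if q = 1 then ext_op N W (cadj Op)
      else if q = 2 then ctrl_op N W Op else ctrl_op N W (cadj Op))"

fun circuit :: "nat \<Rightarrow> nat \<Rightarrow> (nat \<Rightarrow> complex mat) \<Rightarrow> (nat \<Rightarrow> bool) \<Rightarrow> (nat \<Rightarrow> nat)
      \<Rightarrow> complex mat \<Rightarrow> complex mat \<Rightarrow> nat \<Rightarrow> complex mat" where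
  "circuit N W U sel kind O1 O2 0 = U 0"
| "circuit N W U sel kind O1 O2 (Suc t) =
     U (Suc t) * query_op N W (kind t) (if sel t then O1 else O2) * circuit N W U sel kind O1 O2 t"

definition success_prob :: "nat \<Rightarrow> complex mat \<Rightarrow> (nat \<Rightarrow> real) \<Rightarrow> real \<Rightarrow> real \<Rightarrow> real" where
  "success_prob D C est v \<epsilon> = (\<Sum>j\<in>{j. j < D \<and> \<bar>est j - v\<bar> \<le> \<epsilon>}. (cmod (C $$ (j,0)))^2)"

end

theory Submission
  imports Defs "HOL-Analysis.L2_Norm"
begin


lemma index_mult':
  assumes "i < dim_row A" "j < dim_col B" "dim_col A = dim_row B"
  shows "(A * B) $$ (i,j) = (\<Sum>k<dim_col A. A $$ (i,k) * B $$ (k,j))"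
  using assms by (simp add: scalar_prod_def atLeast0LessThan)

lemma sum_split2:
  fixes f :: "nat \<Rightarrow> 'b::comm_monoid_add"
  shows "(\<Sum>r<A*B. f r) = (\<Sum>i<A. \<Sum>j<B. f (i*B + j))"
proof (induction A)
  case 0 then show ?case by simp
next
  case (Suc A)
  have "{..<Suc A * B} = {..<A*B} \<union> {A*B..<A*B+B}" by auto
  then have "(\<Sum>r<Suc A*B. f r) = (\<Sum>r<A*B. f r) + (\<Sum>r\<in>{A*B..<A*B+B}. f r)"
    by (simp add: sum.union_disjoint ivl_disj_int)
  also have "(\<Sum>r\<in>{A*B..<A*B+B}. f r) = (\<Sum>j<B. f (A*B + j))"
    using sum.shift_bounds_nat_ivl[of f 0 "A*B" B]
    by (simp add: atLeast0LessThan add.commute)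
  finally show ?case using Suc by simp
qed

lemma sum_split3:
  fixes f :: "nat \<Rightarrow> 'b::comm_monoid_add"
  shows "(\<Sum>r<2*N*W. f r) = (\<Sum>c<2. \<Sum>x<N. \<Sum>k<W. f (c*(N*W) + x*W + k))"
proof -
  have "(\<Sum>r<2*N*W. f r) = (\<Sum>i<2. \<Sum>j<N*W. f (i*(N*W)+j))"
    using sum_split2[of f 2 "N*W"] by (simp add: mult.assoc)
  also have "\<dots> = (\<Sum>c<2. \<Sum>x<N. \<Sum>k<W. f (c*(N*W) + x*W + k))"
  proof (rule sum.cong[OF refl])
    fix i
    show "(\<Sum>j<N*W. f (i*(N*W)+j)) = (\<Sum>x<N. \<Sum>k<W. f (i*(N*W) + x*W + k))"
      using sum_split2[of "\<lambda>j. f (i*(N*W)+j)" N W] by (simp add: add.assoc)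
  qed
  finally show ?thesis .
qed

lemma decomp_div:
  assumes "x < N" "k < (W::nat)"
  shows "(c*(N*W) + x*W + k) div (N*W) = c"
    "((c*(N*W) + x*W + k) mod (N*W)) div W = x"
    "(c*(N*W) + x*W + k) mod W = k"
proof -
  have xw: "x*W + k < N*W"
  proof -
    have "x*W + k < x*W + W" using assms by simp
    also have "\<dots> = (x+1)*W" by simp
    also have "\<dots> \<le> N*W" using assms by (intro mult_right_mono) auto
    finally show ?thesis .
  qed
  have NW: "N*W \<noteq> 0" using assms by auto
  show "(c*(N*W) + x*W + k) div (N*W) = c" using xw NW
    div_mult_self1[of "N*W" "x*W+k" c]
    by (simp add: add.assoc add.commute)
  show "((c*(N*W) + x*W + k) mod (N*W)) div W = x" using xw assms
    by (simp add: add.assoc)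
  show "(c*(N*W) + x*W + k) mod W = k" using assms
    by (simp add: add.assoc mult.assoc[symmetric] mod_add_left_eq)
qed

lemma decomp_ex:
  assumes "r < 2*N*(W::nat)"
  shows "\<exists>c x k. c < 2 \<and> x < N \<and> k < W \<and> r = c*(N*W) + x*W + k"
proof -
  have W: "W > 0" using assms by (cases W) auto
  define c where "c = r div (N*W)"
  define x where "x = (r mod (N*W)) div W"
  define k where "k = r mod W"
  have "r mod (N*W) = x*W + k" unfolding x_def k_def
    by (metis div_mult_mod_eq mod_mod_cancel dvd_triv_right mult.commute)
  then have "r = c*(N*W) + x*W + k" unfolding c_def
    by (metis add.assoc div_mult_mod_eq)
  moreover have "c < 2" unfolding c_def using assms less_mult_imp_div_less[of r 2 "N*W"]
    by (simp add: mult.assoc)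
  moreover have "N*W > 0" using assms by (cases "N*W") auto
  then have "x < N" unfolding x_def
    by (simp add: div_less_iff_less_mult W mult.commute)
  moreover have "k < W" unfolding k_def using W by simp
  ultimately show ?thesis by blast
qed



definition G :: "nat \<Rightarrow> nat \<Rightarrow> complex mat \<Rightarrow> complex mat \<Rightarrow> complex mat" where
 "G N W A0 A1 = mat (qdim N W) (qdim N W) (\<lambda>(r,s).
     let c = r div (N*W); x = (r mod (N*W)) div W; k = r mod W;
         c' = s div (N*W); x' = (s mod (N*W)) div W; k' = s mod W in
     if c = c' \<and> k = k' then (if c = 0 then A0 else A1) $$ (x,x') else 0)"

lemma idx_lt: assumes "c < 2" "x < N" "k < (W::nat)"
  shows "c*(N*W) + x*W + k < qdim N W"
proof -
  have "x*W + k < x*W + W" using assms by simp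
  also have "\<dots> = (x+1)*W" by simp
  also have "\<dots> \<le> N*W" using assms by (intro mult_right_mono) auto
  finally have "c*(N*W) + x*W + k < c*(N*W) + N*W" by simp
  also have "\<dots> = (c+1)*(N*W)" by simp
  also have "\<dots> \<le> 2*(N*W)" using assms by (intro mult_right_mono) auto
  finally show ?thesis unfolding qdim_def by (simp add: mult.assoc)
qed

lemma decomp_ex': assumes "r < qdim N W"
  obtains c x k where "c < 2" "x < N" "k < W" "r = c*(N*W) + x*W + k"
  using decomp_ex[of r N W] assms unfolding qdim_def by blast

lemma G_dim[simp]: "dim_row (G N W A0 A1) = qdim N W" "dim_col (G N W A0 A1) = qdim N W"
  "G N W A0 A1 \<in> carrier_mat (qdim N W) (qdim N W)"
  unfolding G_def by auto

lemma G_entry: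
  assumes "c < 2" "x < N" "k < W" "c' < 2" "x' < N" "k' < W"
  shows "G N W A0 A1 $$ (c*(N*W)+x*W+k, c'*(N*W)+x'*W+k') =
     (if c = c' \<and> k = k' then (if c = 0 then A0 else A1) $$ (x,x') else 0)"
  using assms idx_lt[of c x N k W] idx_lt[of c' x' N k' W]
  unfolding G_def by (simp add: decomp_div Let_def)

lemma decomp_eq:
  assumes "c < 2" "x < N" "k < W" "c' < 2" "x' < N" "k' < W"
  shows "(c*(N*W)+x*W+k = c'*(N*W)+x'*W+(k'::nat)) \<longleftrightarrow> c = c' \<and> x = x' \<and> k = k'"
  using assms decomp_div[of x N k W c] decomp_div[of x' N k' W c'] by metis

lemma ext_op_G: "ext_op N W Op = G N W Op Op"
  by (rule eq_matI) (auto simp: ext_op_def G_def Let_def)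

lemma ctrl_entry:
  assumes "c < 2" "x < N" "k < W" "c' < 2" "x' < N" "k' < W"
  shows "ctrl_op N W Op $$ (c*(N*W)+x*W+k, c'*(N*W)+x'*W+k') =
     (if c = c' \<and> k = k' then (if c = 0 then (if x = x' then 1 else 0) else Op $$ (x,x')) else 0)"
  using assms idx_lt[of c x N k W] idx_lt[of c' x' N k' W]
  unfolding ctrl_op_def
  apply (subst index_mat)
    apply (simp add: idx_lt assms)
   apply (simp add: idx_lt assms)
  apply (simp only: case_prod_conv Let_def decomp_div[OF assms(2,3)] decomp_div[OF assms(5,6)])
  done

lemma ctrl_op_G: "ctrl_op N W Op = G N W (1\<^sub>m N) Op"
proof (rule eq_matI)
  fix i j assume i: "i < dim_row (G N W (1\<^sub>m N) Op)" and j: "j < dim_col (G N W (1\<^sub>m N) Op)"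
  obtain c x k where ck: "c < 2" "x < N" "k < W" "i = c*(N*W) + x*W + k"
    using decomp_ex'[of i N W] i by auto
  obtain c' x' k' where ck': "c' < 2" "x' < N" "k' < W" "j = c'*(N*W) + x'*W + k'"
    using decomp_ex'[of j N W] j by auto
  show "ctrl_op N W Op $$ (i, j) = G N W (1\<^sub>m N) Op $$ (i, j)"
    unfolding ck(4) ck'(4) using ck ck' by (simp add: G_entry ctrl_entry)
qed (auto simp: ctrl_op_def)

lemma G_minus:
  assumes "A0 \<in> carrier_mat N N" "A1 \<in> carrier_mat N N" "B0 \<in> carrier_mat N N" "B1 \<in> carrier_mat N N"
  shows "G N W A0 A1 - G N W B0 B1 = G N W (A0 - B0) (A1 - B1)"
proof (rule eq_matI)
  fix i j assume i: "i < dim_row (G N W (A0 - B0) (A1 - B1))" and j: "j < dim_col (G N W (A0 - B0) (A1 - B1))"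
  obtain c x k where ck: "c < 2" "x < N" "k < W" "i = c*(N*W) + x*W + k"
    using decomp_ex'[of i N W] i by auto
  obtain c' x' k' where ck': "c' < 2" "x' < N" "k' < W" "j = c'*(N*W) + x'*W + k'"
    using decomp_ex'[of j N W] j by auto
  show "(G N W A0 A1 - G N W B0 B1) $$ (i, j) = G N W (A0 - B0) (A1 - B1) $$ (i, j)"
    using ck ck' i j assms by (simp add: G_entry)
qed auto

lemma cadj_dim[simp]: "dim_row (cadj A) = dim_col A" "dim_col (cadj A) = dim_row A"
  unfolding cadj_def by auto

lemma cadj_carrier[simp]: "A \<in> carrier_mat n m \<Longrightarrow> cadj A \<in> carrier_mat m n"
  unfolding cadj_def carrier_mat_def by auto

lemma cadj_index[simp]: "i < dim_col A \<Longrightarrow> j < dim_row A \<Longrightarrow> cadj A $$ (i,j) = cnj (A $$ (j,i))"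
  unfolding cadj_def by auto

lemma G_cadj:
  assumes "A0 \<in> carrier_mat N N" "A1 \<in> carrier_mat N N"
  shows "cadj (G N W A0 A1) = G N W (cadj A0) (cadj A1)"
proof (rule eq_matI)
  fix i j assume i: "i < dim_row (G N W (cadj A0) (cadj A1))" and j: "j < dim_col (G N W (cadj A0) (cadj A1))"
  obtain c x k where ck: "c < 2" "x < N" "k < W" "i = c*(N*W) + x*W + k"
    using decomp_ex'[of i N W] i by auto
  obtain c' x' k' where ck': "c' < 2" "x' < N" "k' < W" "j = c'*(N*W) + x'*W + k'"
    using decomp_ex'[of j N W] j by auto
  show "cadj (G N W A0 A1) $$ (i, j) = G N W (cadj A0) (cadj A1) $$ (i, j)"
    using ck ck' i j assms by (auto simp: G_entry)
qed auto

lemma sum_delta_k: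
  assumes "k < (W::nat)"
  shows "(\<Sum>k''<W. if P \<and> k'' = k then f else (0::'a::comm_monoid_add)) = (if P then f else 0)"
  using assms by (cases P) (auto simp: sum.delta')

lemma sum_delta_c:
  assumes "c < (2::nat)"
  shows "(\<Sum>c''<2. \<Sum>x''<N. if c'' = c then g x'' else (0::'a::comm_monoid_add)) = (\<Sum>x''<N. g x'')"
proof -
  have "(\<Sum>c''<2. \<Sum>x''<N. if c'' = c then g x'' else (0::'a)) = (\<Sum>c''<2. if c'' = c then (\<Sum>x''<N. g x'') else 0)"
    by (intro sum.cong refl) auto
  also have "\<dots> = (\<Sum>x''<N. g x'')" using assms by (simp add: sum.delta')
  finally show ?thesis .
qed

lemma G_mult:
  assumes "A0 \<in> carrier_mat N N" "A1 \<in> carrier_mat N N" "B0 \<in> carrier_mat N N" "B1 \<in> carrier_mat N N"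
  shows "G N W A0 A1 * G N W B0 B1 = G N W (A0 * B0) (A1 * B1)"
proof (rule eq_matI)
  fix i j assume i: "i < dim_row (G N W (A0 * B0) (A1 * B1))" and j: "j < dim_col (G N W (A0 * B0) (A1 * B1))"
  obtain c x k where ck: "c < 2" "x < N" "k < W" "i = c*(N*W) + x*W + k"
    using decomp_ex'[of i N W] i by auto
  obtain c' x' k' where ck': "c' < 2" "x' < N" "k' < W" "j = c'*(N*W) + x'*W + k'"
    using decomp_ex'[of j N W] j by auto
  define Ac where "Ac = (if c = 0 then A0 else A1)"
  define Bc where "Bc = (if c = 0 then B0 else B1)"
  have "(G N W A0 A1 * G N W B0 B1) $$ (i, j) =
     (\<Sum>m<qdim N W. G N W A0 A1 $$ (i,m) * G N W B0 B1 $$ (m,j))"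
    using i j by (subst index_mult') auto
  also have "\<dots> = (\<Sum>c''<2. \<Sum>x''<N. \<Sum>k''<W.
      G N W A0 A1 $$ (i,c''*(N*W)+x''*W+k'') * G N W B0 B1 $$ (c''*(N*W)+x''*W+k'',j))"
    unfolding qdim_def by (rule sum_split3)
  also have "\<dots> = (\<Sum>c''<2. \<Sum>x''<N. \<Sum>k''<W.
      (if c'' = c \<and> k'' = k then Ac $$ (x,x'') * (if c = c' \<and> k = k' then Bc $$ (x'',x') else 0) else 0))"
    using ck ck' unfolding Ac_def Bc_def
    by (intro sum.cong refl) (auto simp: G_entry)
  also have "\<dots> = (\<Sum>c''<2. \<Sum>x''<N. (if c'' = c then Ac $$ (x,x'') * (if c = c' \<and> k = k' then Bc $$ (x'',x') else 0) else 0))"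
    using ck by (intro sum.cong refl) (rule sum_delta_k)
  also have "\<dots> = (\<Sum>x''<N. Ac $$ (x,x'') * (if c = c' \<and> k = k' then Bc $$ (x'',x') else 0))"
    by (rule sum_delta_c[OF ck(1), where g="\<lambda>x''. Ac $$ (x,x'') * (if c = c' \<and> k = k' then Bc $$ (x'',x') else 0)"])
  also have "\<dots> = (if c = c' \<and> k = k' then (Ac * Bc) $$ (x,x') else 0)"
    using ck ck' assms unfolding Ac_def Bc_def by (auto simp: scalar_prod_def atLeast0LessThan)
  also have "\<dots> = G N W (A0 * B0) (A1 * B1) $$ (i, j)"
    using ck ck' unfolding Ac_def Bc_def by (auto simp: G_entry)
  finally show "(G N W A0 A1 * G N W B0 B1) $$ (i, j) = G N W (A0 * B0) (A1 * B1) $$ (i, j)" .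
qed auto



definition dg :: "nat \<Rightarrow> (nat \<Rightarrow> real) \<Rightarrow> complex mat" where
  "dg D d = mat D D (\<lambda>(i,j). if i = j then complex_of_real (d i) else 0)"

definition nrm2 :: "nat \<Rightarrow> complex mat \<Rightarrow> real" where
  "nrm2 D X = (\<Sum>j<D. (cmod (X $$ (j,0)))^2)"

definition nrm :: "nat \<Rightarrow> complex mat \<Rightarrow> real" where
  "nrm D X = L2_set (\<lambda>j. cmod (X $$ (j,0))) {..<D}"

lemma nrm_sq: "nrm D X = sqrt (nrm2 D X)"
  unfolding nrm_def nrm2_def L2_set_def by simp

lemma cadj_mult:
  assumes "A \<in> carrier_mat n m" "B \<in> carrier_mat m p"
  shows "cadj (A * B) = cadj B * cadj A"
proof (rule eq_matI)
  fix i j assume "i < dim_row (cadj B * cadj A)" "j < dim_col (cadj B * cadj A)"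
  then show "cadj (A * B) $$ (i, j) = (cadj B * cadj A) $$ (i, j)"
    using assms by (simp add: scalar_prod_def mult.commute)
qed (use assms in auto)

lemma cadj_self_00:
  assumes "Y \<in> carrier_mat D D" "D > 0"
  shows "(cadj Y * Y) $$ (0,0) = complex_of_real (nrm2 D Y)"
proof -
  have "(cadj Y * Y) $$ (0,0) = (\<Sum>j<D. cnj (Y $$ (j,0)) * Y $$ (j,0))"
    using assms by (subst index_mult') auto
  also have "\<dots> = (\<Sum>j<D. complex_of_real ((cmod (Y $$ (j,0)))^2))"
    by (intro sum.cong refl) (simp add: complex_norm_square[symmetric] mult.commute)
  finally show ?thesis unfolding nrm2_def by simp
qed

lemma sandwich_dg:
  assumes "X \<in> carrier_mat D D" "D > 0"
  shows "(cadj X * dg D d * X) $$ (0,0) = complex_of_real (\<Sum>j<D. d j * (cmod (X $$ (j,0)))^2)"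
proof -
  have e: "(cadj X * dg D d) $$ (0,j) = cnj (X $$ (j,0)) * d j" if "j < D" for j
  proof -
    have "(cadj X * dg D d) $$ (0,j) = (\<Sum>i<D. cnj (X $$ (i,0)) * (if i = j then complex_of_real (d i) else 0))"
      using assms that by (subst index_mult') (auto simp: dg_def)
    also have "\<dots> = cnj (X $$ (j,0)) * d j" using that
      by (simp add: if_distrib sum.delta cong: if_cong)
    finally show ?thesis .
  qed
  have "(cadj X * dg D d * X) $$ (0,0) = (\<Sum>j<D. (cadj X * dg D d) $$ (0,j) * X $$ (j,0))"
    using assms by (subst index_mult') (auto simp: dg_def)
  also have "\<dots> = (\<Sum>j<D. complex_of_real (d j * (cmod (X $$ (j,0)))^2))"
    using e by (intro sum.cong refl) (simp add: complex_norm_square[symmetric] mult.commute mult.left_commute)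
  finally show ?thesis by simp
qed

lemma nrm2_mult_dg:
  assumes "A \<in> carrier_mat D D" "X \<in> carrier_mat D D" "D > 0" "cadj A * A = dg D d"
  shows "nrm2 D (A * X) = (\<Sum>j<D. d j * (cmod (X $$ (j,0)))^2)"
proof -
  have "complex_of_real (nrm2 D (A * X)) = (cadj (A*X) * (A*X)) $$ (0,0)"
    using cadj_self_00[of "A*X" D] assms by simp
  also have "cadj (A*X) * (A*X) = cadj X * (cadj A * A) * X"
  proof -
    have c: "cadj A \<in> carrier_mat D D" "cadj X \<in> carrier_mat D D" using assms by auto
    have "cadj (A*X) * (A*X) = (cadj X * cadj A) * (A*X)" using assms(1,2) by (simp add: cadj_mult)
    also have "\<dots> = cadj X * (cadj A * (A*X))" using assms(1,2) c by (intro assoc_mult_mat) auto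
    also have "cadj A * (A*X) = (cadj A * A) * X" using assms(1,2) c by (intro assoc_mult_mat[symmetric]) auto
    also have "cadj X * ((cadj A * A) * X) = cadj X * (cadj A * A) * X"
      using assms(1,2) c by (intro assoc_mult_mat[symmetric]) auto
    finally show ?thesis .
  qed
  also have "\<dots> $$ (0,0) = complex_of_real (\<Sum>j<D. d j * (cmod (X $$ (j,0)))^2)"
    using assms sandwich_dg by (simp add: dg_def)
  finally have "complex_of_real (nrm2 D (A * X)) = complex_of_real (\<Sum>j<D. d j * (cmod (X $$ (j,0)))^2)" .
  then show ?thesis by (simp only: of_real_eq_iff)
qed

lemma nrm2_mult_le:
  assumes "A \<in> carrier_mat D D" "X \<in> carrier_mat D D" "D > 0" "cadj A * A = dg D d"
    "\<And>j. j < D \<Longrightarrow> d j \<le> \<mu>"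
  shows "nrm2 D (A * X) \<le> \<mu> * nrm2 D X"
proof -
  have "nrm2 D (A * X) = (\<Sum>j<D. d j * (cmod (X $$ (j,0)))^2)" using nrm2_mult_dg assms by blast
  also have "\<dots> \<le> (\<Sum>j<D. \<mu> * (cmod (X $$ (j,0)))^2)"
    using assms(5) by (intro sum_mono mult_right_mono) auto
  finally show ?thesis by (simp add: nrm2_def sum_distrib_left)
qed

lemma nrm2_mult_eq:
  assumes "A \<in> carrier_mat D D" "X \<in> carrier_mat D D" "D > 0" "cadj A * A = dg D (\<lambda>_. 1)"
  shows "nrm2 D (A * X) = nrm2 D X"
  using nrm2_mult_dg[OF assms] by (simp add: nrm2_def)

lemma nrm_add:
  assumes "X \<in> carrier_mat D D" "Y \<in> carrier_mat D D" "D > 0"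
  shows "nrm D (X + Y) \<le> nrm D X + nrm D Y"
proof -
  have "nrm D (X + Y) \<le> L2_set (\<lambda>j. cmod (X $$ (j,0)) + cmod (Y $$ (j,0))) {..<D}"
    unfolding nrm_def using assms by (intro L2_set_mono) (auto intro: norm_triangle_ineq)
  also have "\<dots> \<le> nrm D X + nrm D Y" unfolding nrm_def by (rule L2_set_triangle_ineq)
  finally show ?thesis .
qed

lemma L2_set_subset:
  assumes "S \<subseteq> T" "finite T"
  shows "L2_set f S \<le> L2_set f T"
  unfolding L2_set_def using assms by (intro real_sqrt_le_mono sum_mono2) auto

lemma nrm_minus_ge:
  assumes "X \<in> carrier_mat D D" "Y \<in> carrier_mat D D" "S \<subseteq> {..<D}" "D > 0"
  shows "nrm D (X - Y) \<ge> L2_set (\<lambda>j. cmod (X $$ (j,0))) S - L2_set (\<lambda>j. cmod (Y $$ (j,0))) S"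
proof -
  have D: "D > 0" using assms by auto
  have fS: "finite S" using assms finite_subset by blast
  have "L2_set (\<lambda>j. cmod (X $$ (j,0))) S \<le> L2_set (\<lambda>j. cmod ((X - Y) $$ (j,0)) + cmod (Y $$ (j,0))) S"
  proof (intro L2_set_mono)
    fix j assume "j \<in> S"
    then have "j < D" using assms by auto
    then have "X $$ (j,0) = (X - Y) $$ (j,0) + Y $$ (j,0)" using assms D by simp
    then show "cmod (X $$ (j,0)) \<le> cmod ((X - Y) $$ (j,0)) + cmod (Y $$ (j,0))"
      by (metis norm_triangle_ineq)
  qed auto
  also have "\<dots> \<le> L2_set (\<lambda>j. cmod ((X - Y) $$ (j,0))) S + L2_set (\<lambda>j. cmod (Y $$ (j,0))) S"
    by (rule L2_set_triangle_ineq)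
  also have "L2_set (\<lambda>j. cmod ((X - Y) $$ (j,0))) S \<le> nrm D (X - Y)"
    unfolding nrm_def using assms by (intro L2_set_subset) auto
  finally show ?thesis by simp
qed

lemma G_one_dg:
  assumes "N > 0" "W > 0"
  shows "G N W (complex_of_real m0 \<cdot>\<^sub>m 1\<^sub>m N) (complex_of_real m1 \<cdot>\<^sub>m 1\<^sub>m N) =
     dg (qdim N W) (\<lambda>r. if r div (N*W) = 0 then m0 else m1)"
proof (rule eq_matI)
  fix i j assume i: "i < dim_row (dg (qdim N W) (\<lambda>r. if r div (N*W) = 0 then m0 else m1))"
    and j: "j < dim_col (dg (qdim N W) (\<lambda>r. if r div (N*W) = 0 then m0 else m1))"
  obtain c x k where ck: "c < 2" "x < N" "k < W" "i = c*(N*W) + x*W + k"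
    using decomp_ex'[of i N W] i by (auto simp: dg_def)
  obtain c' x' k' where ck': "c' < 2" "x' < N" "k' < W" "j = c'*(N*W) + x'*W + k'"
    using decomp_ex'[of j N W] j by (auto simp: dg_def)
  show "G N W (complex_of_real m0 \<cdot>\<^sub>m 1\<^sub>m N) (complex_of_real m1 \<cdot>\<^sub>m 1\<^sub>m N) $$ (i, j) =
     dg (qdim N W) (\<lambda>r. if r div (N*W) = 0 then m0 else m1) $$ (i, j)"
    using i j unfolding ck(4) ck'(4) using ck ck'
    by (auto simp: G_entry dg_def decomp_eq decomp_div)
qed (auto simp: dg_def)



definition Jf :: "nat \<Rightarrow> nat \<Rightarrow> real" where
  "Jf i j = (if (i = 3 \<and> j = 0) \<or> (i = 2 \<and> j = 1) then 1
             else if (i = 0 \<and> j = 3) \<or> (i = 1 \<and> j = 2) then -1 else 0)"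

definition K :: "real \<Rightarrow> real \<Rightarrow> complex mat" where
  "K x y = mat 4 4 (\<lambda>(i,j). complex_of_real ((if i = j then x else 0) + y * Jf i j))"

lemma K_carrier[simp]: "K x y \<in> carrier_mat 4 4" "dim_row (K x y) = 4" "dim_col (K x y) = 4"
  unfolding K_def by auto

lemma less4: "(i::nat) < 4 \<longleftrightarrow> i = 0 \<or> i = 1 \<or> i = 2 \<or> i = 3" by auto

lemma sum4: "(\<Sum>i<(4::nat). f i) = f 0 + f 1 + f 2 + (f 3 :: 'a::comm_monoid_add)"
  by (simp add: eval_nat_numeral lessThan_Suc add.commute add.left_commute)

lemma K_cadj: "cadj (K x y) = K x (-y)"
  by (rule eq_matI) (auto simp: K_def Jf_def less4)

lemma K_mult: "K x y * K x' y' = K (x*x' - y*y') (x*y' + y*x')"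
proof (rule eq_matI)
  fix i j assume "i < dim_row (K (x*x' - y*y') (x*y' + y*x'))" "j < dim_col (K (x*x' - y*y') (x*y' + y*x'))"
  then have ij: "i < 4" "j < 4" by auto
  show "(K x y * K x' y') $$ (i, j) = K (x*x' - y*y') (x*y' + y*x') $$ (i, j)"
    using ij by (subst index_mult') (auto simp: sum4 K_def Jf_def less4 algebra_simps)
qed auto

lemma K_minus: "K x y - K x' y' = K (x - x') (y - y')"
  by (rule eq_matI) (auto simp: K_def algebra_simps)

lemma K_scalar: "K x 0 = complex_of_real x \<cdot>\<^sub>m 1\<^sub>m 4"
  by (rule eq_matI) (auto simp: K_def)

lemma K_gram: "cadj (K u v) * K u v = complex_of_real (u^2 + v^2) \<cdot>\<^sub>m 1\<^sub>m 4"
proof -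
  have "cadj (K u v) * K u v = K (u^2 + v^2) 0" by (simp add: K_cadj K_mult power2_eq_square)
  then show ?thesis by (simp only: K_scalar)
qed

lemma K_gram': "K u v * cadj (K u v) = complex_of_real (u^2 + v^2) \<cdot>\<^sub>m 1\<^sub>m 4"
proof -
  have "K u v * cadj (K u v) = K (u^2 + v^2) 0" by (simp add: K_cadj K_mult power2_eq_square)
  then show ?thesis by (simp only: K_scalar)
qed

lemma K_one: "K 1 0 = 1\<^sub>m 4"
  by (rule eq_matI) (auto simp: K_def)

definition A0 :: "nat \<Rightarrow> real \<Rightarrow> real \<Rightarrow> complex mat" where
  "A0 q a b = K (if q \<le> 1 then a else 1) (if q = 0 then b else if q = 1 then -b else 0)"
definition A1 :: "nat \<Rightarrow> real \<Rightarrow> real \<Rightarrow> complex mat" where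
  "A1 q a b = K a (if q = 0 \<or> q = 2 then b else -b)"

lemma query_K: "query_op 4 W q (K a b) = G 4 W (A0 q a b) (A1 q a b)"
  unfolding query_op_def A0_def A1_def
  by (simp add: ext_op_G ctrl_op_G K_cadj K_one)

lemma one_dg: "1\<^sub>m D = dg D (\<lambda>_. 1)"
  by (rule eq_matI) (auto simp: dg_def)

lemma G_gram:
  assumes "W > 0"
  shows "cadj (G 4 W (K u0 v0) (K u1 v1)) * G 4 W (K u0 v0) (K u1 v1) =
    dg (qdim 4 W) (\<lambda>r. if r div (4*W) = 0 then u0^2+v0^2 else u1^2+v1^2)"
proof -
  have "cadj (G 4 W (K u0 v0) (K u1 v1)) = G 4 W (cadj (K u0 v0)) (cadj (K u1 v1))"
    by (rule G_cadj) simp_all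
  then have "cadj (G 4 W (K u0 v0) (K u1 v1)) * G 4 W (K u0 v0) (K u1 v1) =
     G 4 W (cadj (K u0 v0) * K u0 v0) (cadj (K u1 v1) * K u1 v1)"
    by (simp add: G_mult)
  also have "\<dots> = G 4 W (complex_of_real (u0^2 + v0^2) \<cdot>\<^sub>m 1\<^sub>m 4) (complex_of_real (u1^2 + v1^2) \<cdot>\<^sub>m 1\<^sub>m 4)"
    by (simp only: K_gram)
  also have "\<dots> = dg (qdim 4 W) (\<lambda>r. if r div (4*W) = 0 then u0^2+v0^2 else u1^2+v1^2)"
    using assms by (rule G_one_dg[of 4 W, simplified])
  finally show ?thesis .
qed

lemma query_unitary:
  assumes "W > 0" "a^2 + b^2 = 1"
  shows "cadj (query_op 4 W q (K a b)) * query_op 4 W q (K a b) = dg (qdim 4 W) (\<lambda>_. 1)"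
  unfolding query_K A0_def A1_def
proof -
  let ?u0 = "if q \<le> 1 then a else 1" and ?v0 = "if q = 0 then b else if q = 1 then - b else 0"
    and ?v1 = "if q = 0 \<or> q = 2 then b else - b"
  have "cadj (G 4 W (K ?u0 ?v0) (K a ?v1)) * G 4 W (K ?u0 ?v0) (K a ?v1) =
    dg (qdim 4 W) (\<lambda>r. if r div (4*W) = 0 then ?u0^2+?v0^2 else a^2+?v1^2)"
    by (rule G_gram[OF assms(1)])
  also have "\<dots> = dg (qdim 4 W) (\<lambda>_. 1)"
    using assms(2) by (intro arg_cong[where f="dg _"] ext) auto
  finally show "cadj (G 4 W (K ?u0 ?v0) (K a ?v1)) * G 4 W (K ?u0 ?v0) (K a ?v1) = dg (qdim 4 W) (\<lambda>_. 1)" .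
qed

lemma query_diff:
  "query_op 4 W q (K a b) - query_op 4 W q (K a' b') =
   G 4 W (K (if q \<le> 1 then a - a' else 0) (if q = 0 then b - b' else if q = 1 then b' - b else 0))
         (K (a - a') (if q = 0 \<or> q = 2 then b - b' else b' - b))"
  unfolding query_K A0_def A1_def
  by (simp add: G_minus K_minus)

lemma query_diff_gram:
  assumes "W > 0"
  shows "\<exists>d. cadj (query_op 4 W q (K a b) - query_op 4 W q (K a' b')) *
     (query_op 4 W q (K a b) - query_op 4 W q (K a' b')) = dg (qdim 4 W) d \<and>
     (\<forall>j. d j \<le> (a-a')^2 + (b-b')^2)"
proof -
  have e: "(b' - b)^2 = (b - b')^2" by (simp add: power2_commute)
  show ?thesis unfolding query_diff using assms
    by (intro exI conjI, rule G_gram) (auto simp: e)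
qed



lemma query_carrier[simp]: "query_op 4 W q (K a b) \<in> carrier_mat (qdim 4 W) (qdim 4 W)"
  by (simp add: query_K)

lemma qdim_pos: "W > 0 \<Longrightarrow> qdim 4 W > 0" by (simp add: qdim_def)

lemma nrm_unitary:
  assumes "A \<in> carrier_mat D D" "X \<in> carrier_mat D D" "D > 0" "cadj A * A = dg D (\<lambda>_. 1)"
  shows "nrm D (A * X) = nrm D X"
  using nrm2_mult_eq[OF assms] by (simp add: nrm_sq)

lemma nrm_bound:
  assumes "A \<in> carrier_mat D D" "X \<in> carrier_mat D D" "D > 0" "cadj A * A = dg D d"
    "\<And>j. d j \<le> \<mu>" "\<mu> \<ge> 0"
  shows "nrm D (A * X) \<le> sqrt \<mu> * nrm D X"
proof -
  have "nrm2 D (A * X) \<le> \<mu> * nrm2 D X" using nrm2_mult_le[OF assms(1-4)] assms(5) by blast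
  then have "sqrt (nrm2 D (A * X)) \<le> sqrt (\<mu> * nrm2 D X)" by (rule real_sqrt_le_mono)
  then show ?thesis by (simp add: nrm_sq real_sqrt_mult)
qed

lemma nrm2_one: "D > 0 \<Longrightarrow> nrm2 D (1\<^sub>m D) = 1"
proof -
  assume D: "D > 0"
  have "nrm2 D (1\<^sub>m D) = (\<Sum>j<D. if j = 0 then 1 else 0)"
    unfolding nrm2_def by (intro sum.cong refl) auto
  also have "\<dots> = 1" using D by (simp add: sum.delta)
  finally show ?thesis .
qed

lemma hybrid:
  fixes W :: nat
  defines "D \<equiv> qdim 4 W"
  assumes W: "W > 0"
    and U: "\<forall>t\<le>T. cunitary D (U t)"
    and ab: "a^2 + b^2 = 1" "a'^2 + b'^2 = 1" "a2^2 + b2^2 = 1"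
  shows "t \<le> T \<Longrightarrow> circuit 4 W U sel kind (K a b) (K a2 b2) t \<in> carrier_mat D D \<and>
     circuit 4 W U sel kind (K a' b') (K a2 b2) t \<in> carrier_mat D D \<and>
     nrm2 D (circuit 4 W U sel kind (K a' b') (K a2 b2) t) = 1 \<and>
     nrm D (circuit 4 W U sel kind (K a b) (K a2 b2) t - circuit 4 W U sel kind (K a' b') (K a2 b2) t)
       \<le> t * sqrt ((a-a')^2 + (b-b')^2)"
proof (induction t)
  have Dp: "D > 0" unfolding D_def using W by (simp add: qdim_def)
  case 0
  then have U0: "U 0 \<in> carrier_mat D D" "cadj (U 0) * U 0 = dg D (\<lambda>_. 1)"
    using U unfolding cunitary_def by (auto simp: one_dg)
  have "nrm2 D (U 0) = nrm2 D (U 0 * 1\<^sub>m D)" using U0 by simp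
  also have "\<dots> = 1" using nrm2_mult_eq[OF U0(1) _ Dp U0(2), of "1\<^sub>m D"] nrm2_one[OF Dp] by simp
  finally have "nrm2 D (U 0) = 1" .
  moreover have "nrm D (U 0 - U 0) = 0"
    unfolding nrm_def using U0 by (intro L2_set_0') auto
  ultimately show ?case using U0 by simp
next
  have Dp: "D > 0" unfolding D_def using W by (simp add: qdim_def)
  case (Suc t)
  define \<delta> where "\<delta> = sqrt ((a-a')^2 + (b-b')^2)"
  define C where "C = circuit 4 W U sel kind (K a b) (K a2 b2) t"
  define C' where "C' = circuit 4 W U sel kind (K a' b') (K a2 b2) t"
  define x where "x = (if sel t then a else a2)"
  define y where "y = (if sel t then b else b2)"
  define x' where "x' = (if sel t then a' else a2)"
  define y' where "y' = (if sel t then b' else b2)"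
  define Q where "Q = query_op 4 W (kind t) (K x y)"
  define Q' where "Q' = query_op 4 W (kind t) (K x' y')"
  define V where "V = U (Suc t)"
  from Suc have IH: "C \<in> carrier_mat D D" "C' \<in> carrier_mat D D" "nrm2 D C' = 1"
    "nrm D (C - C') \<le> t * \<delta>" unfolding C_def C'_def \<delta>_def by auto
  have V: "V \<in> carrier_mat D D" "cadj V * V = dg D (\<lambda>_. 1)"
    using U Suc.prems unfolding cunitary_def V_def by (auto simp: one_dg)
  have Q: "Q \<in> carrier_mat D D" "Q' \<in> carrier_mat D D" unfolding Q_def Q'_def D_def by auto
  have xy: "x^2 + y^2 = 1" "x'^2 + y'^2 = 1" unfolding x_def y_def x'_def y'_def using ab by auto
  have Qu: "cadj Q * Q = dg D (\<lambda>_. 1)" unfolding Q_def D_def using query_unitary[OF W xy(1)] .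
  obtain d where d: "cadj (Q - Q') * (Q - Q') = dg D d" "\<And>j. d j \<le> (x-x')^2 + (y-y')^2"
    using query_diff_gram[OF W, of "kind t" x y x' y'] unfolding Q_def Q'_def D_def by blast
  have dd: "(x-x')^2 + (y-y')^2 \<le> \<delta>^2" unfolding \<delta>_def x_def x'_def y_def y'_def by auto
  have e1: "circuit 4 W U sel kind (K a b) (K a2 b2) (Suc t) = V * Q * C"
    unfolding V_def Q_def C_def x_def y_def by (cases "sel t") auto
  have e2: "circuit 4 W U sel kind (K a' b') (K a2 b2) (Suc t) = V * Q' * C'"
    unfolding V_def Q'_def C'_def x'_def y'_def by (cases "sel t") auto
  have car: "V * Q * C \<in> carrier_mat D D" "V * Q' * C' \<in> carrier_mat D D"
    using V Q IH by auto
  have "nrm2 D (V * Q' * C') = nrm2 D (V * (Q' * C'))" using V Q IH by (simp add: assoc_mult_mat[of V D D Q' D C' D])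
  also have "\<dots> = nrm2 D (Q' * C')" using V Q IH Dp by (intro nrm2_mult_eq) auto
  also have "\<dots> = 1"
  proof -
    have Qu': "cadj Q' * Q' = dg D (\<lambda>_. 1)" unfolding Q'_def D_def using query_unitary[OF W xy(2)] .
    show ?thesis using nrm2_mult_eq[OF Q(2) IH(2) Dp Qu'] IH(3) by simp
  qed
  finally have n1: "nrm2 D (V * Q' * C') = 1" .
  have alg: "V * Q * C - V * Q' * C' = V * (Q * (C - C') + (Q - Q') * C')"
  proof -
    have "V * Q * C = V * (Q * C)" "V * Q' * C' = V * (Q' * C')"
      using V Q IH by (auto intro: assoc_mult_mat)
    moreover have "Q * (C - C') = Q * C - Q * C'" using Q IH by (simp add: mult_minus_distrib_mat)
    moreover have "(Q - Q') * C' = Q * C' - Q' * C'" using Q IH by (simp add: minus_mult_distrib_mat)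
    moreover have "Q * C - Q * C' + (Q * C' - Q' * C') = Q * C - Q' * C'"
      using Q IH by (intro eq_matI) auto
    moreover have "V * (Q * C - Q' * C') = V * (Q * C) - V * (Q' * C')"
      using V Q IH by (intro mult_minus_distrib_mat[where nr=D and n=D and nc=D]) auto
    ultimately show ?thesis by simp
  qed
  have "nrm D (V * Q * C - V * Q' * C') = nrm D (Q * (C - C') + (Q - Q') * C')"
    unfolding alg using V Q IH Dp by (intro nrm_unitary) auto
  also have "\<dots> \<le> nrm D (Q * (C - C')) + nrm D ((Q - Q') * C')"
    using Q IH Dp by (intro nrm_add) auto
  also have "nrm D (Q * (C - C')) = nrm D (C - C')"
    using Q IH Dp Qu by (intro nrm_unitary) auto
  also have "nrm D ((Q - Q') * C') \<le> sqrt (\<delta>^2) * nrm D C'"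
    using Q IH Dp d dd by (intro nrm_bound[where d=d]) (auto intro: order_trans)
  also have "nrm D C' = 1" using IH(3) by (simp add: nrm_sq)
  also have "sqrt (\<delta>^2) = \<delta>" unfolding \<delta>_def by simp
  finally have "nrm D (V * Q * C - V * Q' * C') \<le> Suc t * \<delta>" using IH(4) by (simp add: algebra_simps)
  then show ?case using e1 e2 car n1 unfolding \<delta>_def by simp
qed



lemma cdiag_carrier[simp]: "cdiag d f \<in> carrier_mat d d" "dim_row (cdiag d f) = d" "dim_col (cdiag d f) = d"
  unfolding cdiag_def by auto

lemma cadj_one[simp]: "cadj (1\<^sub>m d) = 1\<^sub>m d"
  by (rule eq_matI) auto

lemma cunitary_one: "cunitary d (1\<^sub>m d)"
  unfolding cunitary_def by simp

lemma mult_scal_right: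
  fixes A :: "complex mat"
  assumes "A \<in> carrier_mat n m"
  shows "A * (s \<cdot>\<^sub>m 1\<^sub>m m) = s \<cdot>\<^sub>m A"
proof (rule eq_matI)
  fix i j assume ij: "i < dim_row (s \<cdot>\<^sub>m A)" "j < dim_col (s \<cdot>\<^sub>m A)"
  have "(A * (s \<cdot>\<^sub>m 1\<^sub>m m)) $$ (i,j) = (\<Sum>k<m. A $$ (i,k) * (if k = j then s else 0))"
    using ij assms by (subst index_mult') (auto intro!: sum.cong)
  also have "\<dots> = s * A $$ (i,j)" using ij assms by (simp add: if_distrib sum.delta' cong: if_cong)
  finally show "(A * (s \<cdot>\<^sub>m 1\<^sub>m m)) $$ (i,j) = (s \<cdot>\<^sub>m A) $$ (i,j)" using ij by simp
qed (use assms in auto)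

lemma mult_scal_left:
  fixes A :: "complex mat"
  assumes "A \<in> carrier_mat n m"
  shows "(s \<cdot>\<^sub>m 1\<^sub>m n) * A = s \<cdot>\<^sub>m A"
proof (rule eq_matI)
  fix i j assume ij: "i < dim_row (s \<cdot>\<^sub>m A)" "j < dim_col (s \<cdot>\<^sub>m A)"
  have "((s \<cdot>\<^sub>m 1\<^sub>m n) * A) $$ (i,j) = (\<Sum>k<n. (if i = k then s else 0) * A $$ (k,j))"
    using ij assms by (subst index_mult') (auto intro!: sum.cong)
  also have "\<dots> = (\<Sum>k<n. if k = i then s * A $$ (k,j) else 0)" by (intro sum.cong) auto
  also have "\<dots> = s * A $$ (i,j)" using ij assms by (simp add: sum.delta)
  finally show "((s \<cdot>\<^sub>m 1\<^sub>m n) * A) $$ (i,j) = (s \<cdot>\<^sub>m A) $$ (i,j)" using ij by simp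
qed (use assms in auto)

lemma scal_sandwich:
  fixes M :: "complex mat"
  assumes "M \<in> carrier_mat n n"
  shows "(s \<cdot>\<^sub>m 1\<^sub>m n) * M * (s' \<cdot>\<^sub>m 1\<^sub>m n) = (s * s') \<cdot>\<^sub>m M"
proof -
  have "(s \<cdot>\<^sub>m 1\<^sub>m n) * M = s \<cdot>\<^sub>m M" using assms by (rule mult_scal_left)
  moreover have "(s \<cdot>\<^sub>m M) * (s' \<cdot>\<^sub>m 1\<^sub>m n) = s' \<cdot>\<^sub>m (s \<cdot>\<^sub>m M)" using assms
    by (intro mult_scal_right) auto
  moreover have "s' \<cdot>\<^sub>m (s \<cdot>\<^sub>m M) = (s * s') \<cdot>\<^sub>m M" by (rule eq_matI) auto
  ultimately show ?thesis by simp
qed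

lemma unitary_conj_scalar:
  fixes s :: complex
  assumes "cunitary d U"
  shows "U * (s \<cdot>\<^sub>m 1\<^sub>m d) * cadj U = s \<cdot>\<^sub>m 1\<^sub>m d"
    "cadj U * (s \<cdot>\<^sub>m 1\<^sub>m d) * U = s \<cdot>\<^sub>m 1\<^sub>m d"
proof -
  have U: "U \<in> carrier_mat d d" "cadj U \<in> carrier_mat d d" "cadj U * U = 1\<^sub>m d" "U * cadj U = 1\<^sub>m d"
    using assms unfolding cunitary_def by auto
  have "U * (s \<cdot>\<^sub>m 1\<^sub>m d) = s \<cdot>\<^sub>m U" using U by (intro mult_scal_right) auto
  then have "U * (s \<cdot>\<^sub>m 1\<^sub>m d) * cadj U = (s \<cdot>\<^sub>m U) * cadj U" by simp
  also have "\<dots> = s \<cdot>\<^sub>m (U * cadj U)" using U by (intro mult_smult_assoc_mat) auto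
  finally show "U * (s \<cdot>\<^sub>m 1\<^sub>m d) * cadj U = s \<cdot>\<^sub>m 1\<^sub>m d" using U by simp
  have "cadj U * (s \<cdot>\<^sub>m 1\<^sub>m d) = s \<cdot>\<^sub>m cadj U" using U by (intro mult_scal_right) auto
  then have "cadj U * (s \<cdot>\<^sub>m 1\<^sub>m d) * U = (s \<cdot>\<^sub>m cadj U) * U" by simp
  also have "\<dots> = s \<cdot>\<^sub>m (cadj U * U)" using U by (intro mult_smult_assoc_mat) auto
  finally show "cadj U * (s \<cdot>\<^sub>m 1\<^sub>m d) * U = s \<cdot>\<^sub>m 1\<^sub>m d" using U by simp
qed

lemma unitary_unconj:
  assumes "cunitary d U" "M \<in> carrier_mat d d" "A = U * M * cadj U"
  shows "cadj U * A * U = M"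
proof -
  have U: "U \<in> carrier_mat d d" "cadj U \<in> carrier_mat d d" "cadj U * U = 1\<^sub>m d" "U * cadj U = 1\<^sub>m d"
    using assms unfolding cunitary_def by auto
  have "cadj U * A * U = cadj U * (U * (M * (cadj U * U)))"
    unfolding assms(3) using U(1,2) assms(2) by (simp add: assoc_mult_mat[of _ d d _ d _ d])
  also have "\<dots> = cadj U * (U * M)" using U(3) assms(2) by simp
  also have "\<dots> = (cadj U * U) * M" using U(1,2) assms(2) by (simp add: assoc_mult_mat[of _ d d _ d _ d])
  finally show ?thesis using U(3) assms(2) by simp
qed

lemma cdiag_scalar: "cdiag d (\<lambda>_. c) = complex_of_real c \<cdot>\<^sub>m 1\<^sub>m d"
  by (rule eq_matI) (auto simp: cdiag_def)

lemma mat_powr_scalar: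
  assumes "c > 0"
  shows "mat_powr d (complex_of_real c \<cdot>\<^sub>m 1\<^sub>m d) t = complex_of_real (c powr t) \<cdot>\<^sub>m 1\<^sub>m d"
  unfolding mat_powr_def
proof (rule the_equality)
  show "\<exists>U lam. cunitary d U \<and> (\<forall>i<d. lam i > 0) \<and>
       complex_of_real c \<cdot>\<^sub>m 1\<^sub>m d = U * cdiag d lam * cadj U \<and>
       complex_of_real (c powr t) \<cdot>\<^sub>m 1\<^sub>m d = U * cdiag d (\<lambda>i. lam i powr t) * cadj U"
    using assms by (intro exI[of _ "1\<^sub>m d"] exI[of _ "\<lambda>_. c"]) (simp add: cunitary_one cdiag_scalar)
next
  fix B assume "\<exists>U lam. cunitary d U \<and> (\<forall>i<d. lam i > 0) \<and>
       complex_of_real c \<cdot>\<^sub>m 1\<^sub>m d = U * cdiag d lam * cadj U \<and>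
       B = U * cdiag d (\<lambda>i. lam i powr t) * cadj U"
  then obtain U lam where U: "cunitary d U" and eq: "complex_of_real c \<cdot>\<^sub>m 1\<^sub>m d = U * cdiag d lam * cadj U"
    and B: "B = U * cdiag d (\<lambda>i. lam i powr t) * cadj U" by blast
  have "cadj U * (complex_of_real c \<cdot>\<^sub>m 1\<^sub>m d) * U = cdiag d lam"
    by (rule unitary_unconj[OF U]) (use eq in auto)
  then have "cdiag d lam = complex_of_real c \<cdot>\<^sub>m 1\<^sub>m d" using unitary_conj_scalar(2)[OF U] by simp
  then have "\<forall>i<d. lam i = c"
  proof (intro allI impI)
    fix i assume i: "i < d" and h: "cdiag d lam = complex_of_real c \<cdot>\<^sub>m 1\<^sub>m d"
    have "cdiag d lam $$ (i,i) = (complex_of_real c \<cdot>\<^sub>m 1\<^sub>m d) $$ (i,i)" using h by simp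
    then show "lam i = c" using i by (simp add: cdiag_def)
  qed
  then have "cdiag d (\<lambda>i. lam i powr t) = cdiag d (\<lambda>_. c powr t)"
    unfolding cdiag_def by (intro eq_matI) auto
  then show "B = complex_of_real (c powr t) \<cdot>\<^sub>m 1\<^sub>m d"
    unfolding B cdiag_scalar using unitary_conj_scalar(1)[OF U] by simp
qed



lemma sum2: "(\<Sum>i<(2::nat). f i) = f 0 + (f 1 :: 'a::comm_monoid_add)"
  by (simp add: eval_nat_numeral lessThan_Suc add.commute)

lemma less2: "(i::nat) < 2 \<longleftrightarrow> i = 0 \<or> i = 1" by auto

lemma mat_powr_diag2:
  fixes \<mu> :: "nat \<Rightarrow> real"
  assumes pos: "\<mu> 0 > 0" "\<mu> 1 > 0" and ne: "\<mu> 0 \<noteq> \<mu> 1"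
  shows "mat_powr 2 (cdiag 2 \<mu>) t = cdiag 2 (\<lambda>i. \<mu> i powr t)"
  unfolding mat_powr_def
proof (rule the_equality)
  show "\<exists>U lam. cunitary 2 U \<and> (\<forall>i<2. lam i > 0) \<and>
       cdiag 2 \<mu> = U * cdiag 2 lam * cadj U \<and>
       cdiag 2 (\<lambda>i. \<mu> i powr t) = U * cdiag 2 (\<lambda>i. lam i powr t) * cadj U"
    using pos by (intro exI[of _ "1\<^sub>m 2"] exI[of _ \<mu>]) (auto simp: cunitary_one less2)
next
  fix B assume "\<exists>U lam. cunitary 2 U \<and> (\<forall>i<2. lam i > 0) \<and>
       cdiag 2 \<mu> = U * cdiag 2 lam * cadj U \<and>
       B = U * cdiag 2 (\<lambda>i. lam i powr t) * cadj U"
  then obtain U lam where Uu: "cunitary 2 U" and eq: "cdiag 2 \<mu> = U * cdiag 2 lam * cadj U"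
    and B: "B = U * cdiag 2 (\<lambda>i. lam i powr t) * cadj U" by blast
  have U: "U \<in> carrier_mat 2 2" "cadj U \<in> carrier_mat 2 2" "cadj U * U = 1\<^sub>m 2" "U * cadj U = 1\<^sub>m 2"
    using Uu unfolding cunitary_def by auto
  have s1: "cdiag 2 \<mu> * U = U * cdiag 2 lam"
  proof -
    have "cdiag 2 \<mu> * U = (U * cdiag 2 lam) * (cadj U * U)"
      unfolding eq by (rule assoc_mult_mat) (use U in auto)
    also have "\<dots> = U * cdiag 2 lam" using U(1,3) by simp
    finally show ?thesis .
  qed
  have s2: "lam i = \<mu> 0 \<or> lam i = \<mu> 1" if i: "i < 2" for i
  proof (rule ccontr)
    assume h: "\<not> (lam i = \<mu> 0 \<or> lam i = \<mu> 1)"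
    have z: "U $$ (r,i) = 0" if r: "r < 2" for r
    proof -
      have "(cdiag 2 \<mu> * U) $$ (r,i) = (U * cdiag 2 lam) $$ (r,i)" using s1 by simp
      moreover have "(cdiag 2 \<mu> * U) $$ (r,i) = \<mu> r * U $$ (r,i)"
        using U r i by (subst index_mult') (auto simp: sum2 cdiag_def less2)
      moreover have "(U * cdiag 2 lam) $$ (r,i) = U $$ (r,i) * lam i"
        using U r i by (subst index_mult') (auto simp: sum2 cdiag_def less2)
      ultimately have "(complex_of_real (\<mu> r) - complex_of_real (lam i)) * U $$ (r,i) = 0"
        by (simp add: algebra_simps)
      moreover have "\<mu> r \<noteq> lam i" using h r by (auto simp: less2)
      ultimately show ?thesis by simp
    qed
    have "(cadj U * U) $$ (i,i) = (\<Sum>r<2. cnj (U $$ (r,i)) * U $$ (r,i))"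
      using U i by (subst index_mult') auto
    also have "\<dots> = 0" using z by (simp add: sum2)
    finally show False using U(3) i by simp
  qed
  define f where "f = (\<lambda>x::real. x powr t)"
  define c1 where "c1 = (f (\<mu> 1) - f (\<mu> 0)) / (\<mu> 1 - \<mu> 0)"
  define c0 where "c0 = f (\<mu> 0) - c1 * \<mu> 0"
  have g0: "c0 + c1 * \<mu> 0 = f (\<mu> 0)" unfolding c0_def by simp
  have h1: "c1 * (\<mu> 1 - \<mu> 0) = f (\<mu> 1) - f (\<mu> 0)" using ne by (simp add: c1_def)
  have g1: "c0 + c1 * \<mu> 1 = f (\<mu> 1)"
  proof -
    have "c0 + c1 * \<mu> 1 = f (\<mu> 0) + c1 * (\<mu> 1 - \<mu> 0)" by (simp add: c0_def algebra_simps)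
    then show ?thesis using h1 by simp
  qed
  have s3: "cdiag 2 (\<lambda>i. lam i powr t) = complex_of_real c0 \<cdot>\<^sub>m 1\<^sub>m 2 + complex_of_real c1 \<cdot>\<^sub>m cdiag 2 lam"
  proof (rule eq_matI)
    fix i j assume "i < dim_row (complex_of_real c0 \<cdot>\<^sub>m 1\<^sub>m 2 + complex_of_real c1 \<cdot>\<^sub>m cdiag 2 lam)"
      "j < dim_col (complex_of_real c0 \<cdot>\<^sub>m 1\<^sub>m 2 + complex_of_real c1 \<cdot>\<^sub>m cdiag 2 lam)"
    then have ij: "i < 2" "j < 2" by auto
    have "lam i powr t = c0 + c1 * lam i" using s2[OF ij(1)] g0 g1 unfolding f_def by auto
    then show "cdiag 2 (\<lambda>i. lam i powr t) $$ (i, j) =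
      (complex_of_real c0 \<cdot>\<^sub>m 1\<^sub>m 2 + complex_of_real c1 \<cdot>\<^sub>m cdiag 2 lam) $$ (i, j)"
      using ij by (auto simp: cdiag_def)
  qed auto
  have s4: "U * (complex_of_real c0 \<cdot>\<^sub>m 1\<^sub>m 2 + complex_of_real c1 \<cdot>\<^sub>m cdiag 2 lam) * cadj U
     = complex_of_real c0 \<cdot>\<^sub>m 1\<^sub>m 2 + complex_of_real c1 \<cdot>\<^sub>m cdiag 2 \<mu>"
  proof -
    have a: "U * (complex_of_real c0 \<cdot>\<^sub>m 1\<^sub>m 2 + complex_of_real c1 \<cdot>\<^sub>m cdiag 2 lam) =
      U * (complex_of_real c0 \<cdot>\<^sub>m 1\<^sub>m 2) + U * (complex_of_real c1 \<cdot>\<^sub>m cdiag 2 lam)"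
      using U by (intro mult_add_distrib_mat) auto
    have b: "(U * (complex_of_real c0 \<cdot>\<^sub>m 1\<^sub>m 2) + U * (complex_of_real c1 \<cdot>\<^sub>m cdiag 2 lam)) * cadj U =
      U * (complex_of_real c0 \<cdot>\<^sub>m 1\<^sub>m 2) * cadj U + U * (complex_of_real c1 \<cdot>\<^sub>m cdiag 2 lam) * cadj U"
      using U by (intro add_mult_distrib_mat) auto
    have c: "U * (complex_of_real c0 \<cdot>\<^sub>m 1\<^sub>m 2) * cadj U = complex_of_real c0 \<cdot>\<^sub>m 1\<^sub>m 2"
      by (rule unitary_conj_scalar(1)[OF Uu])
    have d: "U * (complex_of_real c1 \<cdot>\<^sub>m cdiag 2 lam) * cadj U = complex_of_real c1 \<cdot>\<^sub>m cdiag 2 \<mu>"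
    proof -
      have "U * (complex_of_real c1 \<cdot>\<^sub>m cdiag 2 lam) = complex_of_real c1 \<cdot>\<^sub>m (U * cdiag 2 lam)"
        using U by (intro mult_smult_distrib) auto
      moreover have "(complex_of_real c1 \<cdot>\<^sub>m (U * cdiag 2 lam)) * cadj U = complex_of_real c1 \<cdot>\<^sub>m (U * cdiag 2 lam * cadj U)"
        using U by (intro mult_smult_assoc_mat) auto
      ultimately show ?thesis using eq by simp
    qed
    show ?thesis unfolding a b c d ..
  qed
  have s5: "complex_of_real c0 \<cdot>\<^sub>m 1\<^sub>m 2 + complex_of_real c1 \<cdot>\<^sub>m cdiag 2 \<mu> = cdiag 2 (\<lambda>i. \<mu> i powr t)"
  proof (rule eq_matI)
    fix i j assume "i < dim_row (cdiag 2 (\<lambda>i. \<mu> i powr t))" "j < dim_col (cdiag 2 (\<lambda>i. \<mu> i powr t))"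
    then have ij: "i < 2" "j < 2" by auto
    have "\<mu> i powr t = c0 + c1 * \<mu> i" using ij g0 g1 unfolding f_def by (auto simp: less2)
    then show "(complex_of_real c0 \<cdot>\<^sub>m 1\<^sub>m 2 + complex_of_real c1 \<cdot>\<^sub>m cdiag 2 \<mu>) $$ (i, j) =
       cdiag 2 (\<lambda>i. \<mu> i powr t) $$ (i, j)"
      using ij by (auto simp: cdiag_def)
  qed auto
  show "B = cdiag 2 (\<lambda>i. \<mu> i powr t)" unfolding B s3 s4 s5 ..
qed



definition rho :: "real \<Rightarrow> complex mat" where
  "rho p = cdiag 2 (\<lambda>i. if i = 0 then p else 1 - p)"

lemma rho_half: "rho (1/2) = complex_of_real (1/2) \<cdot>\<^sub>m 1\<^sub>m 2"
  by (rule eq_matI) (auto simp: rho_def cdiag_def)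

lemma half_powr_sq: "((1/2::real) powr (-1/2)) * ((1/2) powr (-1/2)) = 2"
  "((1/2::real) powr (1/2)) * ((1/2) powr (1/2)) = 1/2"
  by (simp_all only: powr_add[symmetric]) (simp_all add: powr_minus)

lemma smult_one_mat: "(1::complex) \<cdot>\<^sub>m 1\<^sub>m n = 1\<^sub>m n"
  by (rule eq_matI) auto

lemma Fhat_rho:
  assumes "0 < p" "p < 1" "p \<noteq> 1/2"
  shows "Fhat 2 \<alpha> (rho p) (rho (1/2)) = ((2*p) powr \<alpha> + (2-2*p) powr \<alpha>) / 2"
proof -
  define s where "s = complex_of_real ((1/2) powr (-1/2))"
  define s' where "s' = complex_of_real ((1/2) powr (1/2))"
  define \<mu> where "\<mu> = (\<lambda>i::nat. if i = 0 then 2*p else 2 - 2*p)"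
  have m1: "mat_powr 2 (rho (1/2)) (-1/2) = s \<cdot>\<^sub>m 1\<^sub>m 2"
    unfolding rho_half s_def by (rule mat_powr_scalar) simp
  have m2: "mat_powr 2 (rho (1/2)) (1/2) = s' \<cdot>\<^sub>m 1\<^sub>m 2"
    unfolding rho_half s'_def by (rule mat_powr_scalar) simp
  have ss: "s * s = 2" unfolding s_def using half_powr_sq(1)
    by (metis of_real_mult of_real_numeral)
  have ss': "s' * s' = complex_of_real (1/2)" unfolding s'_def using half_powr_sq(2)
    by (metis of_real_mult)
  have mid: "s \<cdot>\<^sub>m 1\<^sub>m 2 * rho p * (s \<cdot>\<^sub>m 1\<^sub>m 2) = cdiag 2 \<mu>"
  proof -
    have "s \<cdot>\<^sub>m 1\<^sub>m 2 * rho p * (s \<cdot>\<^sub>m 1\<^sub>m 2) = (s * s) \<cdot>\<^sub>m rho p"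
      by (rule scal_sandwich) (simp add: rho_def)
    also have "\<dots> = cdiag 2 \<mu>" unfolding ss
      by (rule eq_matI) (auto simp: rho_def cdiag_def \<mu>_def)
    finally show ?thesis .
  qed
  have pw: "mat_powr 2 (cdiag 2 \<mu>) \<alpha> = cdiag 2 (\<lambda>i. \<mu> i powr \<alpha>)"
    using assms by (intro mat_powr_diag2) (auto simp: \<mu>_def)
  have "mat_geo 2 (rho (1/2)) \<alpha> (rho p) = (s' * s') \<cdot>\<^sub>m cdiag 2 (\<lambda>i. \<mu> i powr \<alpha>)"
    unfolding mat_geo_def m1 m2 mid pw by (rule scal_sandwich) simp
  then have h: "ctrace (mat_geo 2 (rho (1/2)) \<alpha> (rho p)) =
     complex_of_real (1/2) * (complex_of_real ((2*p) powr \<alpha>) + complex_of_real ((2-2*p) powr \<alpha>))"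
    unfolding ss' by (simp add: ctrace_def sum2 cdiag_def \<mu>_def algebra_simps)
  show ?thesis unfolding Fhat_def h by simp
qed

lemma purif:
  assumes "0 \<le> p" "p \<le> 1"
  shows "prepares_purification 1 1 (K (sqrt p) (sqrt (1-p))) (rho p)"
  unfolding prepares_purification_def
proof
  have sq: "(sqrt p)^2 + (sqrt (1-p))^2 = 1" using assms by simp
  show "cunitary (2^(1+1)) (K (sqrt p) (sqrt (1-p)))"
    unfolding cunitary_def using sq by (simp add: K_gram K_gram' smult_one_mat del: real_sqrt_pow2)
  show "ptrace_anc_prep 1 1 (K (sqrt p) (sqrt (1 - p))) = rho p"
  proof (rule eq_matI)
    fix i j assume "i < dim_row (rho p)" "j < dim_col (rho p)"
    then have ij: "i < 2" "j < 2" by (auto simp: rho_def)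
    show "ptrace_anc_prep 1 1 (K (sqrt p) (sqrt (1 - p))) $$ (i, j) = rho p $$ (i, j)"
      using ij assms unfolding ptrace_anc_prep_def
      by (auto simp: sum2 K_def Jf_def rho_def cdiag_def less2 power2_eq_square[symmetric] of_real_power[symmetric])
  qed (auto simp: ptrace_anc_prep_def rho_def)
qed

lemma loew:
  assumes "1/4 \<le> p" "p \<le> 3/4"
  shows "loewner_ge 2 (rho p) (complex_of_real (1/4) \<cdot>\<^sub>m 1\<^sub>m 2)"
  unfolding loewner_ge_def cpsd_def
proof (intro conjI allI)
  show "rho p \<in> carrier_mat 2 2" by (simp add: rho_def)
  show "complex_of_real (1/4) \<cdot>\<^sub>m 1\<^sub>m 2 \<in> carrier_mat 2 2" by simp
  show "rho p - complex_of_real (1/4) \<cdot>\<^sub>m 1\<^sub>m 2 \<in> carrier_mat 2 2"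
    by (rule minus_carrier_mat) (simp_all add: rho_def)
  show "cadj (rho p - complex_of_real (1/4) \<cdot>\<^sub>m 1\<^sub>m 2) = rho p - complex_of_real (1/4) \<cdot>\<^sub>m 1\<^sub>m 2"
    by (rule eq_matI) (auto simp: rho_def cdiag_def)
  fix v :: "nat \<Rightarrow> complex"
  have e: "(\<Sum>i<2. \<Sum>j<2. cnj (v i) * (rho p - complex_of_real (1/4) \<cdot>\<^sub>m 1\<^sub>m 2) $$ (i, j) * v j)
     = complex_of_real (p - 1/4) * (cnj (v 0) * v 0) + complex_of_real (3/4 - p) * (cnj (v 1) * v 1)"
    by (simp add: sum2 rho_def cdiag_def algebra_simps)
  have "Re (cnj (v 0) * v 0) \<ge> 0" "Re (cnj (v 1) * v 1) \<ge> 0" by simp_all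
  then show "0 \<le> Re (\<Sum>i<2. \<Sum>j<2. cnj (v i) * (rho p - complex_of_real (1/4) \<cdot>\<^sub>m 1\<^sub>m 2) $$ (i, j) * v j)"
    unfolding e using assms by simp
qed



definition Ff :: "real \<Rightarrow> real \<Rightarrow> real" where
  "Ff \<alpha> p = ((2*p) powr \<alpha> + (2-2*p) powr \<alpha>) / 2"

definition Lc :: "real \<Rightarrow> real" where
  "Lc \<alpha> = \<alpha> * (1 - (4/3) powr (\<alpha> - 1))"

lemma Lc_pos: "0 < \<alpha> \<Longrightarrow> \<alpha> < 1 \<Longrightarrow> Lc \<alpha> > 0"
  unfolding Lc_def using powr_less_one[of "4/3" "\<alpha> - 1"] by simp

lemma Ff_deriv:
  assumes "0 < x" "x < 1"
  shows "DERIV (Ff \<alpha>) x :> \<alpha> * ((2*x) powr (\<alpha> - 1) - (2-2*x) powr (\<alpha> - 1))"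
proof -
  have d1: "DERIV (\<lambda>x. (2*x) powr \<alpha>) x :> \<alpha> * (2*x) powr (\<alpha> - of_nat 1) * 2"
    by (rule DERIV_fun_powr) (auto intro!: derivative_eq_intros simp: assms)
  have d2: "DERIV (\<lambda>x. (2-2*x) powr \<alpha>) x :> \<alpha> * (2-2*x) powr (\<alpha> - of_nat 1) * (-2)"
    by (rule DERIV_fun_powr) (auto intro!: derivative_eq_intros simp: assms)
  have d: "DERIV (\<lambda>x. ((2*x) powr \<alpha> + (2-2*x) powr \<alpha>) / 2) x :>
      (\<alpha> * (2*x) powr (\<alpha> - of_nat 1) * 2 + \<alpha> * (2-2*x) powr (\<alpha> - of_nat 1) * (-2)) / 2"
    by (intro DERIV_cdivide DERIV_add d1 d2)
  have eq: "(\<alpha> * (2*x) powr (\<alpha> - of_nat 1) * 2 + \<alpha> * (2-2*x) powr (\<alpha> - of_nat 1) * (-2)) / 2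
     = \<alpha> * ((2*x) powr (\<alpha> - 1) - (2-2*x) powr (\<alpha> - 1))" by (simp add: field_simps)
  show ?thesis using d unfolding eq Ff_def[abs_def] .
qed

lemma Ff_gap:
  assumes a: "0 < \<alpha>" "\<alpha> < 1" and pq: "1/4 \<le> p" "p < q" "q \<le> 1/3"
  shows "Ff \<alpha> q - Ff \<alpha> p \<ge> Lc \<alpha> * (q - p)"
proof -
  obtain z where z: "p < z" "z < q"
    "Ff \<alpha> q - Ff \<alpha> p = (q - p) * (\<alpha> * ((2*z) powr (\<alpha> - 1) - (2-2*z) powr (\<alpha> - 1)))"
    using MVT2[OF pq(2), of "Ff \<alpha>" "\<lambda>x. \<alpha> * ((2*x) powr (\<alpha> - 1) - (2-2*x) powr (\<alpha> - 1))"]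
      Ff_deriv pq by force
  have b1: "1 \<le> (2*z) powr (\<alpha> - 1)"
    using powr_mono2'[of "\<alpha> - 1" "2*z" 1] a z pq by simp
  have b2: "(2-2*z) powr (\<alpha> - 1) \<le> (4/3) powr (\<alpha> - 1)"
    using powr_mono2'[of "\<alpha> - 1" "4/3" "2-2*z"] a z pq by simp
  have "Lc \<alpha> \<le> \<alpha> * ((2*z) powr (\<alpha> - 1) - (2-2*z) powr (\<alpha> - 1))"
    unfolding Lc_def using b1 b2 a by (intro mult_left_mono) auto
  then show ?thesis unfolding z(3) using pq by (simp add: mult.commute mult_left_mono)
qed

lemma sqrt_diff_le:
  assumes "1/4 \<le> p" "1/4 \<le> q"
  shows "\<bar>sqrt p - sqrt q\<bar> \<le> \<bar>p - q\<bar>"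
proof -
  have sp: "sqrt p \<ge> 1/2" "sqrt q \<ge> 1/2"
    using real_sqrt_le_mono[OF assms(1)] real_sqrt_le_mono[OF assms(2)]
    by (simp_all add: real_sqrt_divide)
  have "p - q = (sqrt p - sqrt q) * (sqrt p + sqrt q)"
    using assms by (simp add: algebra_simps)
  then have "\<bar>p - q\<bar> = \<bar>sqrt p - sqrt q\<bar> * (sqrt p + sqrt q)"
    using sp by (simp add: abs_mult)
  moreover have "\<bar>sqrt p - sqrt q\<bar> * 1 \<le> \<bar>sqrt p - sqrt q\<bar> * (sqrt p + sqrt q)"
    using sp by (intro mult_left_mono) auto
  ultimately show ?thesis by simp
qed



lemma main_bound:
  fixes \<alpha> \<epsilon> :: real
  assumes a: "0 < \<alpha>" "\<alpha> < 1" and e: "0 < \<epsilon>" "\<epsilon> < Lc \<alpha> / 36"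
    and U: "\<forall>t\<le>T. cunitary (qdim (2^(1+1)) (2^w)) (U t)"
    and succ: "\<forall>\<rho> \<sigma> O\<^sub>\<rho> O\<^sub>\<sigma>.
              loewner_ge (2^1) \<rho> (complex_of_real (1/4) \<cdot>\<^sub>m 1\<^sub>m (2^1)) \<and>
              loewner_ge (2^1) \<sigma> (complex_of_real (1/4) \<cdot>\<^sub>m 1\<^sub>m (2^1)) \<and>
              prepares_purification 1 1 O\<^sub>\<rho> \<rho> \<and> prepares_purification 1 1 O\<^sub>\<sigma> \<sigma> \<longrightarrow>
              success_prob (qdim (2^(1+1)) (2^w)) (circuit (2^(1+1)) (2^w) U sel kind O\<^sub>\<rho> O\<^sub>\<sigma> T) est (Fhat (2^1) \<alpha> \<rho> \<sigma>) \<epsilon> \<ge> 2/3"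
  shows "real T \<ge> (Lc \<alpha> / 30) / \<epsilon>"
proof -
  define L where "L = Lc \<alpha>"
  have L: "L > 0" unfolding L_def using Lc_pos a by blast
  define W :: nat where "W = 2^w"
  have W: "W > 0" unfolding W_def by simp
  define D where "D = qdim 4 W"
  have Dp: "D > 0" unfolding D_def qdim_def using W by simp
  define h where "h = 3 * \<epsilon> / L"
  have h: "0 < h" "h < 1/12" unfolding h_def using e L L_def by (auto simp: field_simps)
  define p :: real where "p = 1/4"
  define q where "q = 1/4 + h"
  have pq: "1/4 \<le> p" "p < q" "q \<le> 1/3" "p \<le> 3/4" "q \<le> 3/4" "0 < p" "q < 1" "p \<noteq> 1/2" "q \<noteq> 1/2"
    unfolding p_def q_def using h by auto
  define Os where "Os = K (sqrt (1/2)) (sqrt (1 - 1/2))"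
  define Cq where "Cq = circuit 4 W U sel kind (K (sqrt q) (sqrt (1-q))) Os T"
  define Cp where "Cp = circuit 4 W U sel kind (K (sqrt p) (sqrt (1-p))) Os T"
  have ls: "loewner_ge 2 (rho (1/2)) (complex_of_real (1/4) \<cdot>\<^sub>m 1\<^sub>m 2)" by (rule loew) auto
  have ps: "prepares_purification 1 1 Os (rho (1/2))" unfolding Os_def by (rule purif) auto
  have sq: "success_prob D Cq est (Ff \<alpha> q) \<epsilon> \<ge> 2/3"
  proof -
    have "success_prob (qdim (2^(1+1)) (2^w)) (circuit (2^(1+1)) (2^w) U sel kind (K (sqrt q) (sqrt (1-q))) Os T) est
        (Fhat (2^1) \<alpha> (rho q) (rho (1/2))) \<epsilon> \<ge> 2/3"
      using succ ls ps loew[of q] purif[of q] pq by simp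
    then show ?thesis unfolding D_def Cq_def W_def Ff_def using Fhat_rho[of q \<alpha>] pq by simp
  qed
  have sp: "success_prob D Cp est (Ff \<alpha> p) \<epsilon> \<ge> 2/3"
  proof -
    have "success_prob (qdim (2^(1+1)) (2^w)) (circuit (2^(1+1)) (2^w) U sel kind (K (sqrt p) (sqrt (1-p))) Os T) est
        (Fhat (2^1) \<alpha> (rho p) (rho (1/2))) \<epsilon> \<ge> 2/3"
      using succ ls ps loew[of p] purif[of p] pq by simp
    then show ?thesis unfolding D_def Cp_def W_def Ff_def using Fhat_rho[of p \<alpha>] pq by simp
  qed
  have gap: "Ff \<alpha> q - Ff \<alpha> p \<ge> 3 * \<epsilon>"
  proof -
    have "Ff \<alpha> q - Ff \<alpha> p \<ge> L * (q - p)" unfolding L_def using Ff_gap[OF a pq(1-3)] .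
    moreover have "L * (q - p) = 3 * \<epsilon>" unfolding q_def p_def h_def using L by simp
    ultimately show ?thesis by simp
  qed
  define Sq where "Sq = {j. j < D \<and> \<bar>est j - Ff \<alpha> q\<bar> \<le> \<epsilon>}"
  define Sp where "Sp = {j. j < D \<and> \<bar>est j - Ff \<alpha> p\<bar> \<le> \<epsilon>}"
  have disj: "Sq \<inter> Sp = {}" unfolding Sq_def Sp_def using gap e by auto
  have sub: "Sq \<subseteq> {..<D}" "Sp \<subseteq> {..<D}" unfolding Sq_def Sp_def by auto
  have fin: "finite Sq" "finite Sp" using sub finite_subset by blast+
  have U': "\<forall>t\<le>T. cunitary D (U t)" using U unfolding D_def W_def by simp
  have hyb: "Cq \<in> carrier_mat D D \<and> Cp \<in> carrier_mat D D \<and> nrm2 D Cp = 1 \<and>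
      nrm D (Cq - Cp) \<le> T * sqrt ((sqrt q - sqrt p)^2 + (sqrt (1-q) - sqrt (1-p))^2)"
    unfolding Cq_def Cp_def Os_def D_def
    by (rule hybrid[OF W U'[unfolded D_def]]) (use pq in auto)
  have bq: "(\<Sum>j\<in>Sq. (cmod (Cq $$ (j,0)))^2) \<ge> 2/3" using sq unfolding success_prob_def Sq_def .
  have bp: "(\<Sum>j\<in>Sp. (cmod (Cp $$ (j,0)))^2) \<ge> 2/3" using sp unfolding success_prob_def Sp_def .
  have bqp: "(\<Sum>j\<in>Sq. (cmod (Cp $$ (j,0)))^2) \<le> 1/3"
  proof -
    have "(\<Sum>j\<in>Sq. (cmod (Cp $$ (j,0)))^2) + (\<Sum>j\<in>Sp. (cmod (Cp $$ (j,0)))^2)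
        = (\<Sum>j\<in>Sq \<union> Sp. (cmod (Cp $$ (j,0)))^2)"
      using disj fin by (simp add: sum.union_disjoint)
    also have "\<dots> \<le> (\<Sum>j<D. (cmod (Cp $$ (j,0)))^2)"
      using sub by (intro sum_mono2) auto
    also have "\<dots> = 1" using hyb unfolding nrm2_def by simp
    finally show ?thesis using bp by simp
  qed
  have l1: "L2_set (\<lambda>j. cmod (Cq $$ (j,0))) Sq \<ge> 4/5"
  proof -
    have "sqrt (16/25) \<le> sqrt (\<Sum>j\<in>Sq. (cmod (Cq $$ (j,0)))^2)" using bq by (intro real_sqrt_le_mono) simp
    moreover have "sqrt (16/25::real) = 4/5" by (simp add: real_sqrt_divide)
    ultimately show ?thesis unfolding L2_set_def by simp
  qed
  have l2: "L2_set (\<lambda>j. cmod (Cp $$ (j,0))) Sq \<le> 3/5"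
  proof -
    have "sqrt (\<Sum>j\<in>Sq. (cmod (Cp $$ (j,0)))^2) \<le> sqrt (9/25)" using bqp by (intro real_sqrt_le_mono) simp
    moreover have "sqrt (9/25::real) = 3/5" by (simp add: real_sqrt_divide)
    ultimately show ?thesis unfolding L2_set_def by simp
  qed
  have lower: "nrm D (Cq - Cp) \<ge> 1/5"
    using nrm_minus_ge[of Cq D Cp Sq] hyb sub Dp l1 l2 by simp
  have d1: "(sqrt q - sqrt p)^2 \<le> h^2"
  proof -
    have "\<bar>sqrt q - sqrt p\<bar> \<le> \<bar>q - p\<bar>" using pq by (intro sqrt_diff_le) auto
    also have "\<bar>q - p\<bar> = h" unfolding q_def p_def using h by simp
    finally show ?thesis by (metis abs_ge_zero power2_abs power_mono)
  qed
  have d2: "(sqrt (1-q) - sqrt (1-p))^2 \<le> h^2"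
  proof -
    have "\<bar>sqrt (1-q) - sqrt (1-p)\<bar> \<le> \<bar>(1-q) - (1-p)\<bar>" using pq by (intro sqrt_diff_le) auto
    also have "\<bar>(1-q) - (1-p)\<bar> = h" unfolding q_def p_def using h by simp
    finally show ?thesis by (metis abs_ge_zero power2_abs power_mono)
  qed
  have "sqrt ((sqrt q - sqrt p)^2 + (sqrt (1-q) - sqrt (1-p))^2) \<le> sqrt ((2*h)^2)"
  proof (rule real_sqrt_le_mono)
    have "(2*h)^2 = 4*h^2" by (simp add: power_mult_distrib)
    then show "(sqrt q - sqrt p)^2 + (sqrt (1-q) - sqrt (1-p))^2 \<le> (2*h)^2"
      using d1 d2 zero_le_power2[of h] by linarith
  qed
  also have "sqrt ((2*h)^2) = 2*h" using h by (simp only: real_sqrt_abs)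
  finally have dl: "sqrt ((sqrt q - sqrt p)^2 + (sqrt (1-q) - sqrt (1-p))^2) \<le> 2*h" .
  have "1/5 \<le> T * (2*h)"
    using lower hyb dl by (meson mult_left_mono of_nat_0_le_iff order_trans)
  then have "1/5 \<le> T * (6 * \<epsilon> / L)" unfolding h_def by simp
  then have "L \<le> 30 * T * \<epsilon>" using L by (simp add: field_simps)
  then show ?thesis unfolding L_def[symmetric] using e by (simp add: field_simps)
qed

theorem mainTheorem13:
  fixes \<alpha> :: real
  assumes "0 < \<alpha>" and "\<alpha> < 1"
  shows "\<exists>(\<kappa>0::real) c\<^sub>\<alpha> \<epsilon>\<^sub>\<alpha> (n::nat) (a::nat). \<kappa>0 \<ge> 1 \<and> c\<^sub>\<alpha> > 0 \<and> \<epsilon>\<^sub>\<alpha> > 0 \<and>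
     (\<forall>\<epsilon>. 0 < \<epsilon> \<and> \<epsilon> < \<epsilon>\<^sub>\<alpha> \<longrightarrow>
       (\<forall>(w::nat) (T::nat) (U :: nat \<Rightarrow> complex mat) (sel :: nat \<Rightarrow> bool) (kind :: nat \<Rightarrow> nat)
           (est :: nat \<Rightarrow> real).
          let N = 2^(n+a); W = 2^w; D = qdim N W in
          (\<forall>t\<le>T. cunitary D (U t)) \<and>
          (\<forall>\<rho> \<sigma> O\<^sub>\<rho> O\<^sub>\<sigma>.
              loewner_ge (2^n) \<rho> (complex_of_real (1/\<kappa>0) \<cdot>\<^sub>m 1\<^sub>m (2^n)) \<and>
              loewner_ge (2^n) \<sigma> (complex_of_real (1/\<kappa>0) \<cdot>\<^sub>m 1\<^sub>m (2^n)) \<and>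
              prepares_purification n a O\<^sub>\<rho> \<rho> \<and> prepares_purification n a O\<^sub>\<sigma> \<sigma> \<longrightarrow>
              success_prob D (circuit N W U sel kind O\<^sub>\<rho> O\<^sub>\<sigma> T) est (Fhat (2^n) \<alpha> \<rho> \<sigma>) \<epsilon> \<ge> 2/3)
          \<longrightarrow> real T \<ge> c\<^sub>\<alpha> / \<epsilon>))"
  proof -
  show ?thesis
    apply (rule exI[of _ "4::real"], rule exI[of _ "Lc \<alpha> / 30"], rule exI[of _ "Lc \<alpha> / 36"],
           rule exI[of _ "1::nat"], rule exI[of _ "1::nat"])
    using Lc_pos[OF assms] main_bound[OF assms] unfolding Let_def by auto
qed

end
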